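(* Let $a_{12},a_{34},d>0$ with $d>\max\{a_{12},a_{34}\}$, and consider the isosceles trapezium in the Euclidean plane with vertices $A_1'=(-a_{12}/2,\,d)$, $A_2'=(a_{12}/2,\,d)$, $A_4=(-a_{34}/2,\,0)$, $A_3=(a_{34}/2,\,0)$. Let $F$ be the intersection point of the diagonals $A_1'A_3$ and $A_2'A_4$, let $\theta=\angle A_1'FA_2'$, let $F_{12}$ be the orthocenter of triangle $A_1'FA_2'$ and $F_{34}$ the orthocenter of triangle $A_4FA_3$, and set $w(\theta)=2\sin\frac{\theta}{2}$. Then $$l_{minT}:=2\,|A_1'F_{12}|+2\,|A_3F_{34}|+w(\theta)\,|F_{12}F_{34}| = 2(a_{34}+a_{12})\cos\frac{\theta}{2}.$$
   Context: $|XY|$ denotes Euclidean distance. The segment $M_{12}M_{34}$ joining the midpoints $M_{12}=(0,d)$ of $A_1'A_2'$ and $M_{34}=(0,0)$ of $A_4A_3$ is the common perpendicular of the two parallel sides, of length $d$. The points $F_{12}$ and $F_{34}$ lie on $M_{12}M_{34}$, with $\angle A_1'F_{12}A_2'=\angle A_3F_{34}A_4=180^\circ-\theta$. In the paper, $F_{12},F_{34}$ with the common weight $w(\theta)$ on the segment $F_{12}F_{34}$ (and unit weights on the four edges to the vertices) form the "minimum construction tree" of the trapezium. *)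

theory Defs
  imports "HOL-Analysis.Analysis"
begin

text \<open>Points of the Euclidean plane are modelled as real \<times> real; the library's
  dist/inner on this product type are the Euclidean ones.\<close>

definition vangle :: "real \<times> real \<Rightarrow> real \<times> real \<Rightarrow> real" where
  "vangle u v = arccos ((u \<bullet> v) / (norm u * norm v))"

definition angle3 :: "real \<times> real \<Rightarrow> real \<times> real \<Rightarrow> real \<times> real \<Rightarrow> real" where
  "angle3 A B C = vangle (A - B) (C - B)"

definition is_orthocenter :: "real \<times> real \<Rightarrow> real \<times> real \<Rightarrow> real \<times> real \<Rightarrow> real \<times> real \<Rightarrow> bool" where
  "is_orthocenter H A B C \<longleftrightarrow> (H - A) \<bullet> (C - B) = 0 \<and> (H - B) \<bullet> (C - A) = 0 \<and> (H - C) \<bullet> (B - A) = 0"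

definition wgt :: "real \<Rightarrow> real" where
  "wgt \<theta> = 2 * sin (\<theta> / 2)"

end

theory Submission
  imports Defs
begin

theorem proposition1:
  fixes a12 a34 d :: real and F F12 F34 :: "real \<times> real"
  assumes "a12 > 0" "a34 > 0" "d > 0" "d > max a12 a34"
    and "F \<in> closed_segment (- a12 / 2, d) (a34 / 2, 0)"
    and "F \<in> closed_segment (a12 / 2, d) (- a34 / 2, 0)"
    and "is_orthocenter F12 (- a12 / 2, d) F (a12 / 2, d)"
    and "is_orthocenter F34 (- a34 / 2, 0) F (a34 / 2, 0)"
  shows "let \<theta> = angle3 (- a12 / 2, d) F (a12 / 2, d) in
    2 * dist (- a12 / 2, d) F12 + 2 * dist (a34 / 2, 0) F34 + wgt \<theta> * dist F12 F34
      = 2 * (a34 + a12) * cos (\<theta> / 2)"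
proof -
  define a where "a = a12"
  define b where "b = a34"
  have a: "a > 0" and b: "b > 0" and da: "d > a" and db: "d > b" using assms(1-4) by (auto simp: a_def b_def)
  define s where "s = a + b"
  have s: "s > 0" using a b s_def by simp
  define p where "p = d * a / s"
  define q where "q = d * b / s"
  define k where "k = s / d"
  have kp: "a = k * p" and kq: "b = k * q" using s \<open>d > 0\<close> by (auto simp: k_def p_def q_def)
  have p: "p > 0" and q: "q > 0" using a b s \<open>d>0\<close> by (auto simp: p_def q_def)
  have k: "k > 0" using s \<open>d>0\<close> by (simp add: k_def)
  have pq: "p + q = d"
  proof -
    have "p + q = d * s / s" by (simp add: p_def q_def s_def add_divide_distrib distrib_left)
    then show ?thesis using s by simp
  qed
  obtain u where u: "F = ((1 - u) * (- a / 2) + u * (b / 2), (1 - u) * d)"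
    using assms(5) unfolding in_segment a_def b_def by (auto simp: algebra_simps)
  obtain v where v: "F = ((1 - v) * (a / 2) + v * (- b / 2), (1 - v) * d)"
    using assms(6) unfolding in_segment a_def b_def by (auto simp: algebra_simps)
  have "u = v" using u v \<open>d > 0\<close> by auto
  then have "(1 - u) * a = u * b" using u v by (auto simp: algebra_simps)
  then have "u = a / s" using s by (simp add: s_def field_simps)
  then have F: "F = (0, q)" using u s a b by (simp add: q_def s_def field_simps)
  obtain x1 y1 where F12: "F12 = (x1, y1)" by (cases F12)
  obtain x2 y2 where F34: "F34 = (x2, y2)" by (cases F34)
  have o1: "(x1 + a/2) * (a/2) + (y1 - d) * p = 0" "x1 * a = 0"
    using assms(7) unfolding is_orthocenter_def F F12 a_def[symmetric]
    by (auto simp: inner_prod_def algebra_simps pq[symmetric])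
  have o2: "(x2 + b/2) * (b/2) - y2 * q = 0" "x2 * b = 0"
    using assms(8) unfolding is_orthocenter_def F F34 b_def[symmetric]
    by (auto simp: inner_prod_def algebra_simps)
  have x1: "x1 = 0" using o1 a by simp
  have x2: "x2 = 0" using o2 b by simp
  have "p * (y1 - (d - a * k / 4)) = 0" using o1 x1 kp by (simp add: algebra_simps)
  then have y1: "y1 = d - a * k / 4" using p by simp
  have "y2 * q = b * b / 4" using o2 x2 by (simp add: algebra_simps)
  also have "\<dots> = (b * k / 4) * q" by (simp add: kq algebra_simps)
  finally have "y2 * q = (b * k / 4) * q" .
  then have y2: "y2 = b * k / 4" using q by simp
  define m where "m = sqrt (1 + k^2/4)"
  have m: "m > 0" using k by (simp add: m_def add_pos_nonneg)
  have m2: "m^2 = 1 + k^2/4" unfolding m_def by (simp add: add_nonneg_nonneg)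
  have d1: "dist (- a / 2, d) F12 = a/2 * m"
  proof -
    have "dist (- a / 2, d) F12 = sqrt ((a/2)^2 + (a*k/4)^2)"
      by (simp add: F12 x1 y1 dist_Pair_Pair dist_real_def power_divide)
    also have "(a/2)^2 + (a*k/4)^2 = (a/2 * m)^2"
      unfolding power_mult_distrib m2 by (simp add: power2_eq_square algebra_simps)
    also have "sqrt ((a/2 * m)^2) = a/2 * m" using a m by simp
    finally show ?thesis .
  qed
  have d2: "dist (b / 2, 0) F34 = b/2 * m"
  proof -
    have "dist (b / 2, 0) F34 = sqrt ((b/2)^2 + (b*k/4)^2)"
      by (simp add: F34 x2 y2 dist_Pair_Pair dist_real_def power_divide)
    also have "(b/2)^2 + (b*k/4)^2 = (b/2 * m)^2"
      unfolding power_mult_distrib m2 by (simp add: power2_eq_square algebra_simps)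
    also have "sqrt ((b/2 * m)^2) = b/2 * m" using b m by simp
    finally show ?thesis .
  qed
  have d3: "dist F12 F34 = d - s * k / 4"
  proof -
    have pos: "d - s * k / 4 > 0"
    proof -
      have "s * s < 2 * d * (2 * d)" using da db a b unfolding s_def
        by (intro mult_strict_mono) auto
      then have "s * s / d < 4 * d" using \<open>d>0\<close> by (simp add: field_simps)
      then show ?thesis unfolding k_def by (simp add: field_simps)
    qed
    have e: "y1 - y2 = d - s * k / 4" by (simp add: y1 y2 s_def algebra_simps)
    have "dist F12 F34 = \<bar>y1 - y2\<bar>" by (simp add: F12 F34 x1 x2 dist_Pair_Pair dist_real_def)
    then show ?thesis using e pos by simp
  qed
  define \<theta> where "\<theta> = angle3 (- a / 2, d) F (a / 2, d)"
  have ct: "cos \<theta> = (1 - k^2/4) / m^2" and th: "0 \<le> \<theta>" "\<theta> \<le> pi"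
  proof -
    have e: "(a/2)^2 + p^2 = (p*m)^2"
      unfolding power_mult_distrib m2 kp by (simp add: power2_eq_square algebra_simps)
    have "norm ((- a / 2, d) - F) = sqrt ((a/2)^2 + p^2)" by (simp add: F norm_Pair pq[symmetric] power_divide)
    also have "\<dots> = p * m" unfolding e using p m by simp
    finally have n1: "norm ((- a / 2, d) - F) = p * m" .
    have "norm ((a / 2, d) - F) = sqrt ((a/2)^2 + p^2)" by (simp add: F norm_Pair pq[symmetric] power_divide)
    also have "\<dots> = p * m" unfolding e using p m by simp
    finally have n2: "norm ((a / 2, d) - F) = p * m" .
    note n = n1 n2
    have i: "((- a / 2, d) - F) \<bullet> ((a / 2, d) - F) = p^2 * (1 - k^2/4)"
      by (simp add: F inner_prod_def pq[symmetric] kp power2_eq_square algebra_simps)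
    have "\<bar>1 - k^2/4\<bar> \<le> m^2" using m2 by (simp add: abs_le_iff)
    then have "\<bar>(1 - k^2/4) / m^2\<bar> \<le> 1" using m by (simp add: abs_divide)
    then have c: "\<bar>(1 - k^2/4) / m^2\<bar> \<le> 1" .
    have arg: "(((- a / 2, d) - F) \<bullet> ((a / 2, d) - F)) / (norm ((- a / 2, d) - F) * norm ((a / 2, d) - F))
      = (1 - k^2/4) / m^2" unfolding i n using p m by (simp add: power2_eq_square)
    have te: "\<theta> = arccos ((1 - k^2/4) / m^2)" unfolding \<theta>_def angle3_def vangle_def arg ..
    show "cos \<theta> = (1 - k^2/4) / m^2" unfolding te using c by (rule cos_arccos_abs)
    show "0 \<le> \<theta>" "\<theta> \<le> pi" unfolding te using c[unfolded abs_le_iff] by (auto intro!: arccos_lbound arccos_ubound)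
  qed
  have ch: "cos (\<theta>/2) = 1/m"
  proof -
    have c0: "cos (\<theta>/2) \<ge> 0" using th by (intro cos_ge_zero) auto
    have "cos \<theta> = 2 * cos (\<theta>/2)^2 - 1" using cos_double[of "\<theta>/2"] by (simp add: cos_squared_eq)
    then have h: "2 * cos (\<theta>/2)^2 = 1 + (1 - k^2/4) / m^2" using ct by simp
    have "1 + (1 - k^2/4) / m^2 = (m^2 + (1 - k^2/4)) / m^2" using m by (simp add: field_simps)
    also have "m^2 + (1 - k^2/4) = 2" by (simp add: m2)
    finally have "cos (\<theta>/2)^2 = 1 / m^2" using h by simp
    then have "cos (\<theta>/2)^2 = (1/m)^2" by (simp add: power_divide)
    then show ?thesis using c0 m by (simp add: power2_eq_iff_nonneg)
  qed
  have sh: "sin (\<theta>/2) = k/2/m"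
  proof -
    have s0: "sin (\<theta>/2) \<ge> 0" using th by (intro sin_ge_zero) auto
    have "sin (\<theta>/2)^2 = 1 - (1/m)^2" using ch by (simp add: sin_squared_eq)
    also have "\<dots> = (m^2 - 1) / m^2" using m by (simp add: field_simps power_divide)
    also have "m^2 - 1 = (k/2)^2" by (simp add: m2 power_divide)
    also have "(k/2)^2 / m^2 = (k/2/m)^2" by (simp add: power_divide)
    finally show ?thesis using s0 m k by (simp add: power2_eq_iff_nonneg)
  qed
  have "2 * (a/2*m) + 2 * (b/2*m) + 2 * (k/2/m) * (d - s*k/4) = 2 * (b + a) * (1/m)"
  proof -
    have "m * (2 * (a/2*m) + 2 * (b/2*m) + 2 * (k/2/m) * (d - s*k/4)) = s * m^2 + k * (d - s*k/4)"
      using m by (simp add: s_def field_simps power2_eq_square)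
    also have "\<dots> = s * (m^2 - k^2/4) + k * d" by (simp add: algebra_simps power2_eq_square)
    also have "\<dots> = 2 * s" using \<open>d>0\<close> by (simp add: m2 k_def)
    finally show ?thesis using m by (simp add: s_def field_simps)
  qed
  then show ?thesis unfolding Let_def wgt_def a_def[symmetric] b_def[symmetric] \<theta>_def[symmetric]
    d1 d2 d3 ch sh by simp
qed

end
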